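(* Let $X_{\mathcal M}$ and $Y_{\mathcal M}$ be independent multiterminal sources on $\mathcal M$, and let $Z_{\mathcal M}$ be the clubbed source, $Z_i=(X_i,Y_i)$ for $i\in\mathcal M$. Then $$\mathbf I(Z_{\mathcal M})\ge\mathbf I(X_{\mathcal M})+\mathbf I(Y_{\mathcal M}),$$ with equality if and only if $\Pi^*_X\cap\Pi^*_Y\ne\emptyset$.
   Context: Let $\mathcal M=\{1,\dots,m\}$, $m\ge2$. A source $W_{\mathcal M}=(W_1,\dots,W_m)$ is a tuple of jointly distributed finite-valued random variables, and $W_A=(W_i:i\in A)$. The sources $X_{\mathcal M}$ and $Y_{\mathcal M}$ being independent means the tuple $X_{\mathcal M}$ is independent of the tuple $Y_{\mathcal M}$. For a partition $\mathcal P$ of $\mathcal M$ with $|\mathcal P|\ge2$, $\Delta_W(\mathcal P)=\frac1{|\mathcal P|-1}[\sum_{A\in\mathcal P}H(W_A)-H(W_{\mathcal M})]$, and $\mathbf I(W_{\mathcal M})=\min_{\mathcal P}\Delta_W(\mathcal P)$. $\Pi^*_X$ (resp. $\Pi^*_Y$) is the set of partitions attaining the minimum for $X_{\mathcal M}$ (resp. $Y_{\mathcal M}$). *)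

theory Defs
  imports "HOL-Probability.Probability" "HOL-Library.Disjoint_Sets"
begin

text \<open>A multiterminal source on M = {1..m} is modelled by a finitely supported pmf W
  on functions nat => 'a; the i-th component W_i is the i-th coordinate.\<close>

definition pmf_entropy :: "'a pmf \<Rightarrow> real" where
  "pmf_entropy p = (\<Sum>x\<in>set_pmf p. - pmf p x * log 2 (pmf p x))"

definition marg :: "(nat \<Rightarrow> 'a) pmf \<Rightarrow> nat set \<Rightarrow> (nat \<Rightarrow> 'a) pmf" where
  "marg W A = map_pmf (\<lambda>w. restrict w A) W"

definition Hs :: "(nat \<Rightarrow> 'a) pmf \<Rightarrow> nat set \<Rightarrow> real" where
  "Hs W A = pmf_entropy (marg W A)"

definition parts :: "nat \<Rightarrow> nat set set set" where
  "parts m = {P. partition_on {1..m} P \<and> card P \<ge> 2}"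

definition Delta :: "nat \<Rightarrow> (nat \<Rightarrow> 'a) pmf \<Rightarrow> nat set set \<Rightarrow> real" where
  "Delta m W P = ((\<Sum>A\<in>P. Hs W A) - Hs W {1..m}) / (real (card P) - 1)"

definition MI :: "nat \<Rightarrow> (nat \<Rightarrow> 'a) pmf \<Rightarrow> real" where
  "MI m W = Min (Delta m W ` parts m)"

definition optparts :: "nat \<Rightarrow> (nat \<Rightarrow> 'a) pmf \<Rightarrow> nat set set set" where
  "optparts m W = {P \<in> parts m. Delta m W P = MI m W}"

end

theory Submission
  imports Defs
begin

lemma entropy_inj:
  assumes "inj_on f (set_pmf p)"
  shows "pmf_entropy (map_pmf f p) = pmf_entropy p"
proof -
  have "pmf_entropy (map_pmf f p) = (\<Sum>x\<in>f ` set_pmf p. - pmf (map_pmf f p) x * log 2 (pmf (map_pmf f p) x))"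
    by (simp add: pmf_entropy_def)
  also have "\<dots> = (\<Sum>x\<in>set_pmf p. - pmf (map_pmf f p) (f x) * log 2 (pmf (map_pmf f p) (f x)))"
    using assms by (simp add: sum.reindex)
  also have "\<dots> = pmf_entropy p"
    unfolding pmf_entropy_def using assms by (intro sum.cong) (simp_all add: pmf_map_inj)
  finally show ?thesis .
qed

lemma entropy_pair:
  assumes fp: "finite (set_pmf p)" and fq: "finite (set_pmf q)"
  shows "pmf_entropy (pair_pmf p q) = pmf_entropy p + pmf_entropy q"
proof -
  have sp: "sum (pmf p) (set_pmf p) = 1" using fp by (simp add: sum_pmf_eq_1)
  have sq: "sum (pmf q) (set_pmf q) = 1" using fq by (simp add: sum_pmf_eq_1)
  have "pmf_entropy (pair_pmf p q) = (\<Sum>(a,b)\<in>set_pmf p \<times> set_pmf q. - (pmf p a * pmf q b) * log 2 (pmf p a * pmf q b))"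
    unfolding pmf_entropy_def set_pair_pmf by (intro sum.cong refl) (clarsimp simp: pmf_pair)
  also have "\<dots> = (\<Sum>a\<in>set_pmf p. \<Sum>b\<in>set_pmf q. - (pmf p a * pmf q b) * log 2 (pmf p a * pmf q b))"
    by (simp add: sum.cartesian_product)
  also have "\<dots> = (\<Sum>a\<in>set_pmf p. \<Sum>b\<in>set_pmf q. pmf q b * (- pmf p a * log 2 (pmf p a)) + pmf p a * (- pmf q b * log 2 (pmf q b)))"
  proof (intro sum.cong refl)
    fix a b assume "a \<in> set_pmf p" "b \<in> set_pmf q"
    hence "pmf p a > 0" "pmf q b > 0" by (simp_all add: pmf_positive)
    thus "- (pmf p a * pmf q b) * log 2 (pmf p a * pmf q b) = pmf q b * (- pmf p a * log 2 (pmf p a)) + pmf p a * (- pmf q b * log 2 (pmf q b))"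
      by (simp add: log_mult algebra_simps)
  qed
  also have "\<dots> = (\<Sum>a\<in>set_pmf p. (- pmf p a * log 2 (pmf p a)) * sum (pmf q) (set_pmf q) + pmf p a * pmf_entropy q)"
  proof (intro sum.cong refl)
    fix a
    have "(\<Sum>b\<in>set_pmf q. pmf q b * (- pmf p a * log 2 (pmf p a)) + pmf p a * (- pmf q b * log 2 (pmf q b)))
      = (\<Sum>b\<in>set_pmf q. pmf q b * (- pmf p a * log 2 (pmf p a))) + (\<Sum>b\<in>set_pmf q. pmf p a * (- pmf q b * log 2 (pmf q b)))"
      by (rule sum.distrib)
    also have "\<dots> = (- pmf p a * log 2 (pmf p a)) * sum (pmf q) (set_pmf q) + pmf p a * pmf_entropy q"
      unfolding pmf_entropy_def sum_distrib_left[symmetric] sum_distrib_right[symmetric] by simp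
    finally show "(\<Sum>b\<in>set_pmf q. pmf q b * (- pmf p a * log 2 (pmf p a)) + pmf p a * (- pmf q b * log 2 (pmf q b)))
      = (- pmf p a * log 2 (pmf p a)) * sum (pmf q) (set_pmf q) + pmf p a * pmf_entropy q" .
  qed
  also have "\<dots> = pmf_entropy p + sum (pmf p) (set_pmf p) * pmf_entropy q"
    unfolding sq sum.distrib pmf_entropy_def sum_distrib_right[symmetric] by simp
  also have "\<dots> = pmf_entropy p + pmf_entropy q" by (simp add: sp)
  finally show ?thesis .
qed

lemma min_sum:
  fixes f g :: "'c \<Rightarrow> real"
  assumes "finite S" "S \<noteq> {}"
  shows "Min ((\<lambda>P. f P + g P) ` S) \<ge> Min (f ` S) + Min (g ` S)
    \<and> (Min ((\<lambda>P. f P + g P) ` S) = Min (f ` S) + Min (g ` S) \<longleftrightarrow>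
        {P \<in> S. f P = Min (f ` S)} \<inter> {P \<in> S. g P = Min (g ` S)} \<noteq> {})"
proof -
  have lf: "\<And>P. P \<in> S \<Longrightarrow> Min (f ` S) \<le> f P" by (rule Min_le) (use assms in auto)
  have lg: "\<And>P. P \<in> S \<Longrightarrow> Min (g ` S) \<le> g P" by (rule Min_le) (use assms in auto)
  have ge: "Min ((\<lambda>P. f P + g P) ` S) \<ge> Min (f ` S) + Min (g ` S)"
  proof (rule Min.boundedI)
    show "finite ((\<lambda>P. f P + g P) ` S)" using assms by simp
    show "(\<lambda>P. f P + g P) ` S \<noteq> {}" using assms by simp
    fix y assume "y \<in> (\<lambda>P. f P + g P) ` S"
    then obtain P where "P \<in> S" "y = f P + g P" by blast
    thus "Min (f ` S) + Min (g ` S) \<le> y" using lf lg add_mono by blast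
  qed
  have "Min ((\<lambda>P. f P + g P) ` S) \<in> (\<lambda>P. f P + g P) ` S"
    by (rule Min_in) (use assms in auto)
  then obtain P0 where P0: "P0 \<in> S" "Min ((\<lambda>P. f P + g P) ` S) = f P0 + g P0"
    by blast
  show ?thesis
  proof (intro conjI ge iffI)
    assume "Min ((\<lambda>P. f P + g P) ` S) = Min (f ` S) + Min (g ` S)"
    with P0 lf[OF P0(1)] lg[OF P0(1)] have "f P0 = Min (f ` S)" "g P0 = Min (g ` S)" by linarith+
    with P0 show "{P \<in> S. f P = Min (f ` S)} \<inter> {P \<in> S. g P = Min (g ` S)} \<noteq> {}" by blast
  next
    assume "{P \<in> S. f P = Min (f ` S)} \<inter> {P \<in> S. g P = Min (g ` S)} \<noteq> {}"
    then obtain P where P: "P \<in> S" "f P = Min (f ` S)" "g P = Min (g ` S)" by blast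
    have "Min ((\<lambda>P. f P + g P) ` S) \<le> f P + g P" by (rule Min_le) (use assms(1) P(1) in auto)
    with P ge show "Min ((\<lambda>P. f P + g P) ` S) = Min (f ` S) + Min (g ` S)" by linarith
  qed
qed

lemma parts_finite: "finite (parts m)"
proof -
  have "parts m \<subseteq> Pow (Pow {1..m})"
    unfolding parts_def partition_on_def by auto
  thus ?thesis by (rule finite_subset) simp
qed

lemma parts_nonempty:
  assumes "m \<ge> 2" shows "parts m \<noteq> {}"
proof -
  let ?P = "(\<lambda>i. {i}) ` {1..m}"
  have "partition_on {1..m} ?P" unfolding partition_on_def disjoint_def by auto
  moreover have "card ?P = m" by (subst card_image) (auto simp: inj_on_def)
  ultimately have "?P \<in> parts m" using assms unfolding parts_def by simp
  thus ?thesis by blast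
qed

theorem proposition3:
  fixes m :: nat and J :: "((nat \<Rightarrow> 'a) \<times> (nat \<Rightarrow> 'b)) pmf"
  assumes "m \<ge> 2"
    and "finite (set_pmf J)"
    and "J = pair_pmf (map_pmf fst J) (map_pmf snd J)"
  defines "X \<equiv> map_pmf fst J"
    and "Y \<equiv> map_pmf snd J"
    and "Z \<equiv> map_pmf (\<lambda>(x, y). (\<lambda>i. (x i, y i))) J"
  shows "MI m Z \<ge> MI m X + MI m Y
         \<and> (MI m Z = MI m X + MI m Y \<longleftrightarrow> optparts m X \<inter> optparts m Y \<noteq> {})"
proof -
  have J: "J = pair_pmf X Y" using assms(3) unfolding X_def Y_def .
  have fX: "finite (set_pmf X)" using assms(2) unfolding X_def by simp
  have fY: "finite (set_pmf Y)" using assms(2) unfolding Y_def by simp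
  have H: "Hs Z A = Hs X A + Hs Y A" for A
  proof -
    define g :: "(nat \<Rightarrow> 'a) \<times> (nat \<Rightarrow> 'b) \<Rightarrow> (nat \<Rightarrow> 'a \<times> 'b)"
      where "g = (\<lambda>(u, v). restrict (\<lambda>i. (u i, v i)) A)"
    have "marg Z A = map_pmf g (map_pmf (\<lambda>(x, y). (restrict x A, restrict y A)) (pair_pmf X Y))"
      unfolding marg_def Z_def J pmf.map_comp o_def
      by (intro map_pmf_cong refl ext) (auto simp: g_def restrict_def)
    also have "\<dots> = map_pmf g (pair_pmf (marg X A) (marg Y A))"
      by (simp add: map_pair marg_def)
    finally have eq: "marg Z A = map_pmf g (pair_pmf (marg X A) (marg Y A))" .
    have inj: "inj_on g (set_pmf (pair_pmf (marg X A) (marg Y A)))"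
    proof (rule inj_onI)
      fix a b assume a: "a \<in> set_pmf (pair_pmf (marg X A) (marg Y A))"
        and b: "b \<in> set_pmf (pair_pmf (marg X A) (marg Y A))" and e: "g a = g b"
      obtain u v where uv: "a = (u, v)" "u \<in> extensional A" "v \<in> extensional A"
        using a by (cases a) (auto simp: marg_def)
      obtain u' v' where uv': "b = (u', v')" "u' \<in> extensional A" "v' \<in> extensional A"
        using b by (cases b) (auto simp: marg_def)
      have "u = u' \<and> v = v'"
      proof (intro conjI ext)
        fix i show "u i = u' i"
          using uv uv' fun_cong[OF e, of i] by (cases "i \<in> A") (auto simp: g_def extensional_def)
      next
        fix i show "v i = v' i"
          using uv uv' fun_cong[OF e, of i] by (cases "i \<in> A") (auto simp: g_def extensional_def)
      qed
      thus "a = b" using uv uv' by simp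
    qed
    have "Hs Z A = pmf_entropy (pair_pmf (marg X A) (marg Y A))"
      unfolding Hs_def eq by (rule entropy_inj[OF inj])
    also have "\<dots> = Hs X A + Hs Y A"
      unfolding Hs_def using fX fY by (intro entropy_pair) (simp_all add: marg_def)
    finally show ?thesis .
  qed
  have D: "Delta m Z P = Delta m X P + Delta m Y P" for P
    unfolding Delta_def H by (simp add: sum.distrib add_divide_distrib[symmetric])
  have MZ: "MI m Z = Min ((\<lambda>P. Delta m X P + Delta m Y P) ` parts m)"
    unfolding MI_def D ..
  have OX: "optparts m X = {P \<in> parts m. Delta m X P = Min (Delta m X ` parts m)}"
    unfolding optparts_def MI_def ..
  have OY: "optparts m Y = {P \<in> parts m. Delta m Y P = Min (Delta m Y ` parts m)}"
    unfolding optparts_def MI_def ..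
  show ?thesis
    unfolding MZ OX OY unfolding MI_def
    by (rule min_sum[OF parts_finite parts_nonempty[OF assms(1)]])
qed

end
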